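(* Let $p=3$, $a\in\mathbb{C}_3$, $a\ne0$, $A=|a|_3$, $f(x)=\frac{ax}{x^2+a}$, and $t_1=\sqrt{-2a}$, $t_2=-\sqrt{-2a}$. Let $0<r<\sqrt A$. Then: (a) for every $x\in S_r(t_1)\setminus\mathcal P_2$, $\lim_{n\to\infty}f^{2n}(x)=t_1$ and $\lim_{n\to\infty}f^{2n+1}(x)=t_2$; (b) for every $x\in S_r(t_2)\setminus\mathcal P_2$, $\lim_{n\to\infty}f^{2n}(x)=t_2$ and $\lim_{n\to\infty}f^{2n+1}(x)=t_1$.
   Context: $S_r(t)=\{x\in\mathbb{C}_3:|x-t|_3=r\}$. $\mathcal P_2=\{x\in\mathbb{C}_p:\exists n\in\mathbb{N},\ f^n(x)\in\{\pm\sqrt{-a},\ \pm\sqrt{(-3\pm\sqrt5)a/2}\}\}$ (the points whose orbit reaches a singularity of $f$ or $f\circ f$). The points $t_1,t_2$ form a $2$-cycle of $f$. *)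

theory Defs
  imports Complex_Main "HOL-Computational_Algebra.Polynomial" "HOL-Computational_Algebra.Primes"
begin

text \<open>We characterise C_3 abstractly:
  a field of characteristic 0 carrying an absolute value nrm which is multiplicative,
  non-archimedean (ultrametric), restricts to the 3-adic absolute value on the integers,
  is complete, and such that the field is algebraically closed.\<close>

definition cp_field :: "nat \<Rightarrow> ('a::field_char_0 \<Rightarrow> real) \<Rightarrow> bool" where
  "cp_field p nrm \<longleftrightarrow>
     prime p \<and>
     (\<forall>x. nrm x \<ge> 0) \<and> (\<forall>x. nrm x = 0 \<longleftrightarrow> x = 0) \<and>
     (\<forall>x y. nrm (x * y) = nrm x * nrm y) \<and>
     (\<forall>x y. nrm (x + y) \<le> max (nrm x) (nrm y)) \<and>
     (\<forall>n::int. n \<noteq> 0 \<longrightarrow> nrm (of_int n) = real p powr (- real (multiplicity (int p) n))) \<and>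
     (\<forall>s::nat \<Rightarrow> 'a. (\<forall>e>0. \<exists>N. \<forall>m\<ge>N. \<forall>n\<ge>N. nrm (s m - s n) < e)
          \<longrightarrow> (\<exists>l. \<forall>e>0. \<exists>N. \<forall>n\<ge>N. nrm (s n - l) < e)) \<and>
     (\<forall>q::'a poly. degree q > 0 \<longrightarrow> (\<exists>x. poly q x = 0))"

definition sphere_nrm :: "('a::field \<Rightarrow> real) \<Rightarrow> 'a \<Rightarrow> real \<Rightarrow> 'a set" where
  "sphere_nrm nrm t r = {x. nrm (x - t) = r}"

definition conv_nrm :: "('a::field \<Rightarrow> real) \<Rightarrow> (nat \<Rightarrow> 'a) \<Rightarrow> 'a \<Rightarrow> bool" where
  "conv_nrm nrm s l \<longleftrightarrow> (\<forall>e>0. \<exists>N. \<forall>n\<ge>N. nrm (s n - l) < e)"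

definition fmap :: "'a::field \<Rightarrow> 'a \<Rightarrow> 'a" where
  "fmap a x = a * x / (x^2 + a)"

text \<open>Singularities of f and f o f: \<plusminus>sqrt(-a), \<plusminus>sqrt((-3\<plusminus>sqrt 5) a / 2).\<close>
definition sing2 :: "'a::field \<Rightarrow> 'a set" where
  "sing2 a = {s. s^2 = - a \<or> (\<exists>w. w^2 = 5 \<and> s^2 = (-3 + w) * a / 2)}"

definition P2 :: "'a::field \<Rightarrow> 'a set" where
  "P2 a = {x. \<exists>n. (fmap a ^^ n) x \<in> sing2 a}"

end

theory Submission
  imports Defs
begin

lemma nrm_basic:
  assumes "cp_field 3 (nrm::'a::field_char_0 \<Rightarrow> real)"
  shows nrm_ge0: "\<And>x. nrm x \<ge> 0"
    and nrm_eq0: "\<And>x. nrm x = 0 \<longleftrightarrow> x = 0"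
    and nrm_mult: "\<And>x y. nrm (x*y) = nrm x * nrm y"
    and nrm_ultra: "\<And>x y. nrm (x+y) \<le> max (nrm x) (nrm y)"
    and nrm_int: "\<And>n::int. n \<noteq> 0 \<Longrightarrow> nrm (of_int n) = 3 powr (- real (multiplicity 3 n))"
  using assms unfolding cp_field_def by auto

lemma alg1: "x = h + t \<Longrightarrow> a*x + t*(x^2+a) - h*(t*h - 3*a) = (t+2*h)*(t*t+2*(a::'a::field_char_0))"
  by (simp add: algebra_simps power2_eq_square)

lemma alg2: "-2*a + 2*a = (0::'a::field_char_0)" by simp

context
  fixes nrm :: "'a::field_char_0 \<Rightarrow> real"
  assumes cp: "cp_field 3 nrm"
begin

lemma n1: "nrm 1 = 1"
proof -
  have "nrm 1 = nrm 1 * nrm 1" using nrm_mult[OF cp, of 1 1] by simp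
  moreover have "nrm 1 \<noteq> 0" using nrm_eq0[OF cp] by simp
  ultimately show ?thesis by (metis mult_cancel_left1)
qed

lemma nneg: "nrm (-x) = nrm x"
proof -
  have "nrm (-1) * nrm (-1) = 1" using nrm_mult[OF cp, of "-1" "-1"] n1 by simp
  hence "nrm (-1) = 1" using nrm_ge0[OF cp, of "-1"]
    by (metis abs_of_nonneg mult_cancel_left1 mult_le_cancel_right1 mult_minus_left neg_equal_0_iff_equal nrm_eq0[OF cp] order_antisym_conv real_sqrt_abs2 real_sqrt_mult_self zero_neq_neg_one)
  then show ?thesis using nrm_mult[OF cp, of "-1" x] by simp
qed

lemma ndiv: "v \<noteq> 0 \<Longrightarrow> nrm (u / v) = nrm u / nrm v"
proof -
  assume v: "v \<noteq> 0"
  have "nrm u = nrm (u/v) * nrm v" using nrm_mult[OF cp, of "u/v" v] v by simp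
  moreover have "nrm v \<noteq> 0" using v nrm_eq0[OF cp] by simp
  ultimately show ?thesis by simp
qed

lemma nstrict: "nrm y < nrm x \<Longrightarrow> nrm (x + y) = nrm x"
proof -
  assume h: "nrm y < nrm x"
  have a1: "nrm (x+y) \<le> nrm x" using nrm_ultra[OF cp, of x y] h by simp
  have "nrm x \<le> max (nrm (x+y)) (nrm (-y))" using nrm_ultra[OF cp, of "x+y" "-y"] by simp
  then have "nrm x \<le> nrm (x+y)" using h nneg[of y] by (auto simp: max_def split: if_splits)
  with a1 show ?thesis by simp
qed

lemma n2: "nrm (2::'a) = 1"
proof -
  have "\<not> (3::int) dvd 2" by simp
  hence "multiplicity (3::int) 2 = 0" by (rule not_dvd_imp_multiplicity_0)
  then show ?thesis using nrm_int[OF cp, of 2] by simp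
qed

lemma n3: "nrm (3::'a) = 1/3"
proof -
  have "multiplicity (3::int) 3 = 1" by (rule multiplicity_self) auto
  then show ?thesis using nrm_int[OF cp, of 3] by (simp add: powr_minus)
qed

lemma step:
  fixes a t x :: 'a and r :: real
  assumes a0: "a \<noteq> 0" and t2: "t^2 = -2*a" and r: "r < sqrt (nrm a)"
    and hx: "nrm (x - t) \<le> r"
  shows "nrm (fmap a x - (-t)) \<le> max (r / sqrt (nrm a)) (1/3) * nrm (x - t)"
proof -
  define h where "h = x - t"
  define s where "s = sqrt (nrm a)"
  have A: "nrm a > 0" using a0 nrm_eq0[OF cp, of a] nrm_ge0[OF cp, of a] by linarith
  have s0: "s > 0" using A s_def by simp
  have ss: "s * s = nrm a" using A s_def by simp
  have "nrm t * nrm t = nrm (-2*a)" using nrm_mult[OF cp, of t t] t2 by (simp add: power2_eq_square)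
  also have "\<dots> = nrm a" using nrm_mult[OF cp, of "-2" a] nneg[of 2] n2 by simp
  finally have nt: "nrm t = s" using nrm_ge0[OF cp, of t] s_def
    by (metis real_sqrt_mult_self abs_of_nonneg real_sqrt_abs2)
  have hr: "nrm h \<le> r" using hx h_def by simp
  have h0: "nrm h \<ge> 0" using nrm_ge0[OF cp] by simp
  have "nrm (2*t) = s" using nrm_mult[OF cp, of 2 t] n2 nt by simp
  hence "nrm (2*t + h) \<le> s" using nrm_ultra[OF cp, of "2*t" h] hr r s_def by simp
  hence "nrm (h*(2*t+h)) \<le> r * s" using nrm_mult[OF cp, of h "2*t+h"] hr h0 s0
    mult_mono[of "nrm h" r "nrm (2*t+h)" s] nrm_ge0[OF cp, of "2*t+h"] by simp
  also have "\<dots> < s * s" using r s0 s_def mult_strict_right_mono[of r s s] by simp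
  finally have lt: "nrm (h*(2*t+h)) < nrm (-a)" using ss nneg by simp
  have xe: "x = h + t" using h_def by simp
  have tt: "t*t = -2*a" using t2 by (simp add: power2_eq_square)
  have den: "x^2 + a = -a + h*(2*t+h)" unfolding xe power2_eq_square
    by (simp add: algebra_simps tt)
  have nden: "nrm (x^2 + a) = nrm a"
  proof -
    have "nrm (-a + h*(2*t+h)) = nrm (-a)" by (rule nstrict[OF lt])
    then show ?thesis unfolding den nneg .
  qed
  hence den0: "x^2 + a \<noteq> 0" using A nrm_eq0[OF cp, of 0] by auto
  have num: "a*x + t*(x^2+a) = h*(t*h - 3*a)"
  proof -
    have "a*x + t*(x^2+a) - h*(t*h - 3*a) = (t+2*h)*(t*t+2*a)"
      by (rule alg1[OF xe])
    also have "\<dots> = 0"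
    proof -
      have z: "t*t + 2*a = 0" 
      proof -
        have "t*t + 2*a = -2*a + 2*a" using arg_cong[OF tt, of "\<lambda>u. u + 2*a"] .
        then show ?thesis by (simp only: alg2)
      qed
      show ?thesis by (simp only: z mult_zero_right)
    qed
    finally show ?thesis by (simp only: right_minus_eq)
  qed
  have fx: "fmap a x - (-t) = (a*x + t*(x^2+a)) / (x^2+a)"
    using den0 unfolding fmap_def by (simp add: field_simps)
  have "nrm (t*h) = s * nrm h" using nrm_mult[OF cp] nt by simp
  moreover have "nrm (-(3*a)) = nrm a / 3" using nrm_mult[OF cp, of 3 a] n3 nneg by simp
  ultimately have "nrm (t*h - 3*a) \<le> max (s * nrm h) (nrm a / 3)"
    using nrm_ultra[OF cp, of "t*h" "-(3*a)"] by simp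
  also have "\<dots> \<le> nrm a * max (r / s) (1/3)"
  proof -
    have "s * nrm h \<le> s * r" using hr s0 by (simp add: mult_left_mono)
    also have "s * r = nrm a * (r/s)" using s0 ss[symmetric] by (simp add: field_simps)
    finally have "s * nrm h \<le> nrm a * (r/s)" .
    also have "\<dots> \<le> nrm a * max (r / s) (1/3)" using A mult_left_mono[of "r/s" "max (r / s) (1/3)" "nrm a"] by simp
    finally have m1: "s * nrm h \<le> nrm a * max (r / s) (1/3)" .
    have "nrm a / 3 = nrm a * (1/3)" by simp
    also have "\<dots> \<le> nrm a * max (r / s) (1/3)" using A mult_left_mono[of "1/3" "max (r / s) (1/3)" "nrm a"] by linarith
    finally show ?thesis using m1 by simp
  qed
  finally have nn: "nrm (t*h - 3*a) \<le> nrm a * max (r / s) (1/3)" .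
  have "nrm (fmap a x - (-t)) = nrm h * nrm (t*h - 3*a) / nrm a"
    using fx num ndiv[OF den0] nden nrm_mult[OF cp] by simp
  also have "\<dots> \<le> nrm h * (nrm a * max (r / s) (1/3)) / nrm a"
    using nn h0 A by (intro divide_right_mono mult_left_mono) auto
  also have "\<dots> = max (r / s) (1/3) * nrm h" using A by simp
  finally show ?thesis using s_def h_def by simp
qed

lemma main:
  fixes a t x :: 'a and r :: real
  assumes a0: "a \<noteq> 0" and t2: "t^2 = -2*a" and r0: "0 < r" and r: "r < sqrt (nrm a)"
    and hx: "nrm (x - t) = r"
  shows "conv_nrm nrm (\<lambda>n. (fmap a ^^ (2*n)) x) t \<and>
         conv_nrm nrm (\<lambda>n. (fmap a ^^ (2*n+1)) x) (-t)"
proof -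
  define q where "q = max (r / sqrt (nrm a)) (1/3)"
  define sg where "sg n = (if even n then t else -t)" for n :: nat
  have A: "nrm a > 0" using a0 nrm_eq0[OF cp, of a] nrm_ge0[OF cp, of a] by linarith
  have q1: "q < 1" using r A unfolding q_def by simp
  have q0: "q > 0" unfolding q_def by simp
  have sg2: "(sg n)^2 = -2*a" for n using t2 unfolding sg_def by simp
  have bound: "nrm ((fmap a ^^ n) x - sg n) \<le> r * q^n" for n
  proof (induction n)
    case 0 then show ?case using hx sg_def by simp
  next
    case (Suc n)
    have "r * q^n \<le> r" using q0 q1 r0 by (simp add: power_le_one)
    hence le: "nrm ((fmap a ^^ n) x - sg n) \<le> r" using Suc by simp
    have "nrm (fmap a ((fmap a ^^ n) x) - (- sg n)) \<le> q * nrm ((fmap a ^^ n) x - sg n)"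
      using step[OF a0 sg2 r le] q_def by simp
    also have "\<dots> \<le> q * (r * q^n)" using Suc q0 by simp
    finally show ?case by (cases "even n") (simp_all add: sg_def mult.commute mult.left_commute)
  qed
  have conv: "\<exists>N. \<forall>n\<ge>N. r * q^n < e" if e: "e > 0" for e
  proof -
    obtain N where N: "q^N < e / r" using real_arch_pow_inv[of "e/r" q] e r0 q1 by auto
    have "\<forall>n\<ge>N. r * q^n < e"
    proof (intro allI impI)
      fix n assume "n \<ge> N"
      hence "q^n \<le> q^N" using q0 q1 by (simp add: power_decreasing)
      hence "q^n < e/r" using N by simp
      thus "r * q^n < e" using r0 by (simp add: field_simps)
    qed
    thus ?thesis by blast
  qed
  have c1: "conv_nrm nrm (\<lambda>n. (fmap a ^^ (2*n)) x) t"
    unfolding conv_nrm_def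
  proof (intro allI impI)
    fix e :: real assume e: "e > 0"
    obtain N where N: "\<forall>n\<ge>N. r * q^n < e" using conv[OF e] by blast
    have "\<forall>n\<ge>N. nrm ((fmap a ^^ (2*n)) x - t) < e"
    proof (intro allI impI)
      fix n assume "n \<ge> N" hence "2*n \<ge> N" by simp
      thus "nrm ((fmap a ^^ (2*n)) x - t) < e" using N bound[of "2*n"] sg_def by force
    qed
    thus "\<exists>N. \<forall>n\<ge>N. nrm ((fmap a ^^ (2*n)) x - t) < e" by blast
  qed
  have c2: "conv_nrm nrm (\<lambda>n. (fmap a ^^ (2*n+1)) x) (-t)"
    unfolding conv_nrm_def
  proof (intro allI impI)
    fix e :: real assume e: "e > 0"
    obtain N where N: "\<forall>n\<ge>N. r * q^n < e" using conv[OF e] by blast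
    have "\<forall>n\<ge>N. nrm ((fmap a ^^ (2*n+1)) x - (-t)) < e"
    proof (intro allI impI)
      fix n assume "n \<ge> N" hence "2*n+1 \<ge> N" by simp
      thus "nrm ((fmap a ^^ (2*n+1)) x - (-t)) < e" using N bound[of "2*n+1"] sg_def by force
    qed
    thus "\<exists>N. \<forall>n\<ge>N. nrm ((fmap a ^^ (2*n+1)) x - (-t)) < e" by blast
  qed
  show ?thesis using c1 c2 by simp
qed

end

theorem theorem4p3:
  fixes nrm :: "'a::field_char_0 \<Rightarrow> real" and a t1 t2 :: 'a and r :: real
  assumes "cp_field 3 nrm"
    and "a \<noteq> 0"
    and "t1^2 = -2 * a" and "t2 = - t1"
    and "0 < r" and "r < sqrt (nrm a)"
  shows "(\<forall>x \<in> sphere_nrm nrm t1 r - P2 a.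
            conv_nrm nrm (\<lambda>n. (fmap a ^^ (2*n)) x) t1 \<and>
            conv_nrm nrm (\<lambda>n. (fmap a ^^ (2*n+1)) x) t2)
       \<and> (\<forall>x \<in> sphere_nrm nrm t2 r - P2 a.
            conv_nrm nrm (\<lambda>n. (fmap a ^^ (2*n)) x) t2 \<and>
            conv_nrm nrm (\<lambda>n. (fmap a ^^ (2*n+1)) x) t1)"
proof -
  have t22: "t2^2 = -2*a" using assms(3,4) by simp
  show ?thesis
    using main[OF assms(1,2,3,5,6)] main[OF assms(1,2) t22 assms(5,6)] assms(4)
    unfolding sphere_nrm_def by auto
qed

end
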